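(* Let $R$ be a unital associative ring and let $J=J_2\circ J_1$ act on $M_2(R)$. Then ${\rm dom}(J)={\rm dom}(J^{-1})=M_2^*(R)\cap M_2^\star(R)$, and $J$ maps ${\rm dom}(J)$ bijectively onto itself according to the formula $$J(A)=\begin{pmatrix} a-bd^{-1}c & b-ac^{-1}d\\ c-db^{-1}a & d-ca^{-1}b\end{pmatrix},\qquad A=\begin{pmatrix} a&b\\ c&d\end{pmatrix}\in M_2^\star(R)\cap M_2^*(R).$$ Furthermore, $J(A)\sim J^{-1}(A)$ for each $A\in{\rm dom}(J)$, and $A\in{\rm dom}(J)={\rm dom}(J^{-1})$ if and only if $a,b,c,d,db^{-1}-ca^{-1}\in R^*$.
   Context: $R^*$ denotes the units of $R$. $M_n^*(R)$ is the set of invertible $n\times n$ matrices over $R$, $M_n^\star(R)$ the set of $n\times n$ matrices with all entries in $R^*$. $J_1(M)=M^{-1}$ on $M_n^*(R)$; $J_2(M)_{jk}=(M_{kj})^{-1}$ on $M_n^\star(R)$. Compositions $g\circ f$ have domain $\{x\in{\rm dom}(f):f(x)\in{\rm dom}(g)\}$. $J^{-1}:=J_1\circ J_2$. For $A,B\in M_n(R)$, $A\sim B$ means $B=D_1^{-1}AD_2$ for some invertible diagonal matrices $D_1,D_2$. *)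

theory Defs
  imports "HOL-Analysis.Analysis"
begin

definition is_runit :: "'a::ring_1 \<Rightarrow> bool" where
  "is_runit x \<longleftrightarrow> (\<exists>y. x * y = 1 \<and> y * x = 1)"

definition rinv :: "'a::ring_1 \<Rightarrow> 'a" where
  "rinv x = (SOME y. x * y = 1 \<and> y * x = 1)"

text \<open>M_n^*(R): invertible matrices;  M_n^star(R): matrices all of whose entries are units.\<close>

definition inv_mats :: "('a::ring_1 ^ 'n ^ 'n) set" where
  "inv_mats = {M. invertible M}"

definition unit_mats :: "('a::ring_1 ^ 'n ^ 'n) set" where
  "unit_mats = {M. \<forall>j k. is_runit (M $ j $ k)}"

definition J1 :: "'a::ring_1 ^ 'n ^ 'n \<Rightarrow> 'a ^ 'n ^ 'n" where
  "J1 M = matrix_inv M"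

definition J2 :: "'a::ring_1 ^ 'n ^ 'n \<Rightarrow> 'a ^ 'n ^ 'n" where
  "J2 M = (\<chi> j k. rinv (M $ k $ j))"

definition dom_J :: "('a::ring_1 ^ 'n ^ 'n) set" where
  "dom_J = {M \<in> inv_mats. J1 M \<in> unit_mats}"

definition J :: "'a::ring_1 ^ 'n ^ 'n \<Rightarrow> 'a ^ 'n ^ 'n" where
  "J M = J2 (J1 M)"

definition dom_Jinv :: "('a::ring_1 ^ 'n ^ 'n) set" where
  "dom_Jinv = {M \<in> unit_mats. J2 M \<in> inv_mats}"

definition Jinv :: "'a::ring_1 ^ 'n ^ 'n \<Rightarrow> 'a ^ 'n ^ 'n" where
  "Jinv M = J1 (J2 M)"

definition diagonal_mat :: "'a::ring_1 ^ 'n ^ 'n \<Rightarrow> bool" where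
  "diagonal_mat D \<longleftrightarrow> (\<forall>i j. i \<noteq> j \<longrightarrow> D $ i $ j = 0)"

definition diag_equiv :: "'a::ring_1 ^ 'n ^ 'n \<Rightarrow> 'a ^ 'n ^ 'n \<Rightarrow> bool" where
  "diag_equiv A B \<longleftrightarrow> (\<exists>D1 D2. diagonal_mat D1 \<and> diagonal_mat D2 \<and> invertible D1 \<and> invertible D2
       \<and> B = matrix_inv D1 ** A ** D2)"

end

theory Submission
  imports Defs
begin


lemma mult_cancel1: fixes a b y :: "'a::ring_1" shows "a * b = 1 \<Longrightarrow> a * (b * y) = y"
  by (simp add: mult.assoc[symmetric])

lemma runit_inv: "is_runit x \<Longrightarrow> x * rinv x = 1 \<and> rinv x * x = 1"
  unfolding is_runit_def rinv_def by (rule someI_ex)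

lemma rinv_eq: fixes x y :: "'a::ring_1" assumes "x * y = 1" "y * x = 1" shows "rinv x = y"
proof -
  have u: "is_runit x" using assms is_runit_def by blast
  from runit_inv[OF u] have r: "x * rinv x = 1" "rinv x * x = 1" by auto
  have "rinv x = (y * x) * rinv x" using assms by simp
  also have "\<dots> = y" using r by (simp add: mult.assoc)
  finally show ?thesis .
qed

lemma is_runitI: fixes x y :: "'a::ring_1" shows "x * y = 1 \<Longrightarrow> y * x = 1 \<Longrightarrow> is_runit x"
  unfolding is_runit_def by blast

lemma runit_mult: fixes x y :: "'a::ring_1" assumes "is_runit x" "is_runit y"
  shows "is_runit (x*y)" "rinv (x*y) = rinv y * rinv x"
proof -
  from runit_inv[OF assms(1)] runit_inv[OF assms(2)]
  have h: "x * y * (rinv y * rinv x) = 1" "rinv y * rinv x * (x * y) = 1"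
    by (simp_all add: mult.assoc mult_cancel1)
  show "is_runit (x*y)" using is_runitI h by blast
  show "rinv (x*y) = rinv y * rinv x" using rinv_eq h by blast
qed

lemma runit_neg: fixes x :: "'a::ring_1" assumes "is_runit x"
  shows "is_runit (-x)" "rinv (-x) = - rinv x"
proof -
  from runit_inv[OF assms] have h: "(-x) * (- rinv x) = 1" "(- rinv x) * (-x) = 1" by auto
  show "is_runit (-x)" using is_runitI h by blast
  show "rinv (-x) = - rinv x" using rinv_eq h by blast
qed

lemma runit_rinv: fixes x :: "'a::ring_1" assumes "is_runit x"
  shows "is_runit (rinv x)" "rinv (rinv x) = x"
  using runit_inv[OF assms] is_runitI rinv_eq by blast+

lemma runit_neg_iff: fixes x :: "'a::ring_1" shows "is_runit (-x) \<longleftrightarrow> is_runit x"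
  using runit_neg[of x] runit_neg[of "-x"] by auto

lemma runit_sandwich: fixes u w z :: "'a::ring_1" assumes "is_runit u" "is_runit z"
  shows "is_runit (u*w*z) \<longleftrightarrow> is_runit w"
proof
  assume h: "is_runit (u*w*z)"
  have "w = rinv u * (u*w*z) * rinv z"
    using runit_inv[OF assms(1)] runit_inv[OF assms(2)] by (simp add: mult.assoc mult_cancel1)
  then show "is_runit w" using h runit_mult runit_rinv assms by metis
next
  assume "is_runit w" then show "is_runit (u*w*z)" using runit_mult assms by metis
qed

definition mk2 :: "'a::ring_1 \<Rightarrow> 'a \<Rightarrow> 'a \<Rightarrow> 'a \<Rightarrow> 'a^2^2" where
  "mk2 a b c d = vector [vector [a,b], vector [c,d]]"

lemma mk2_nth[simp]: "mk2 a b c d $1$1 = a" "mk2 a b c d $1$2 = b" "mk2 a b c d $2$1 = c" "mk2 a b c d $2$2 = d"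
  by (simp_all add: mk2_def)

lemma mk2_eta: "(M::'a::ring_1^2^2) = mk2 (M$1$1) (M$1$2) (M$2$1) (M$2$2)"
  by (simp add: vec_eq_iff forall_2)

lemma mk2_eq: "mk2 a b c d = mk2 a' b' c' d' \<longleftrightarrow> a = a' \<and> b = b' \<and> c = c' \<and> d = d'"
  by (auto simp add: vec_eq_iff forall_2)

lemma mk2_mult: "mk2 a b c d ** mk2 e f g h = mk2 (a*e+b*g) (a*f+b*h) (c*e+d*g) (c*f+d*h)"
  by (simp add: vec_eq_iff forall_2 matrix_matrix_mult_def sum_2)

lemma mat1_2: "(mat 1 :: 'a::ring_1^2^2) = mk2 1 0 0 1"
  by (simp add: vec_eq_iff forall_2 mat_def)

lemma J2_mk2: "J2 (mk2 a b c d) = mk2 (rinv a) (rinv c) (rinv b) (rinv d)"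
  by (simp add: vec_eq_iff forall_2 J2_def)

lemma unit_mats_mk2: "mk2 a b c d \<in> unit_mats \<longleftrightarrow> is_runit a \<and> is_runit b \<and> is_runit c \<and> is_runit d"
  by (simp add: unit_mats_def forall_2)

lemma diag_mk2: "diagonal_mat (mk2 u 0 0 v)"
  by (simp add: diagonal_mat_def forall_2)

lemma inv_unique: fixes A B :: "'a::ring_1^'n^'n" assumes "A ** B = mat 1" "B ** A = mat 1"
  shows "invertible A" "matrix_inv A = B"
proof -
  show i: "invertible A" using assms invertible_def by blast
  have s: "A ** matrix_inv A = mat 1 \<and> matrix_inv A ** A = mat 1"
    unfolding matrix_inv_def using someI_ex[OF i[unfolded invertible_def]] by blast
  have "matrix_inv A = (B ** A) ** matrix_inv A" using assms by simp
  also have "\<dots> = B" using s by (metis matrix_mul_assoc matrix_mul_rid)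
  finally show "matrix_inv A = B" .
qed

lemma inv_props: fixes A :: "'a::ring_1^'n^'n" assumes "invertible A"
  shows "A ** matrix_inv A = mat 1" "matrix_inv A ** A = mat 1" "invertible (matrix_inv A)" "matrix_inv (matrix_inv A) = A"
proof -
  show s1: "A ** matrix_inv A = mat 1" and s2: "matrix_inv A ** A = mat 1"
    unfolding matrix_inv_def using someI_ex[OF assms[unfolded invertible_def]] by blast+
  show "invertible (matrix_inv A)" "matrix_inv (matrix_inv A) = A" using inv_unique[OF s2 s1] by auto
qed



context
  fixes a b c d ai bi ci di m x :: "'a::ring_1"
  assumes ha: "a*ai = 1" "ai*a = 1" and hb: "b*bi = 1" "bi*b = 1"
    and hc: "c*ci = 1" "ci*c = 1" and hd: "d*di = 1" "di*d = 1"
    and hm: "m*x = 1" "x*m = 1" and hmd: "a = m + b*di*c"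
begin

lemma hbdc: "b*(di*(c*y)) = a*y - m*y" "b*(di*c) = a - m"
  using hmd by (simp_all add: algebra_simps)

lemma hdc: "di*(c*y) = bi*(a*y) - bi*(m*y)"
proof -
  have "di*(c*y) = bi*(b*(di*(c*y)))" using hb by (simp add: mult.assoc[symmetric])
  also have "\<dots> = bi*(a*y) - bi*(m*y)" by (simp add: hbdc algebra_simps)
  finally show ?thesis .
qed

lemma hdc2: "di*c = bi*a - bi*m"
  using hdc[of 1] by simp

lemmas C = mult_cancel1[OF ha(1)] mult_cancel1[OF ha(2)] mult_cancel1[OF hb(1)] mult_cancel1[OF hb(2)]
  mult_cancel1[OF hc(1)] mult_cancel1[OF hc(2)] mult_cancel1[OF hd(1)] mult_cancel1[OF hd(2)]
  mult_cancel1[OF hm(1)] mult_cancel1[OF hm(2)] ha hb hc hd hm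

lemma N1: "a*x + b*(-(di*c*x)) = 1" by (simp add: algebra_simps C hmd)
lemma N2: "a*(-(x*b*di)) + b*(bi*a*x*b*di) = 0" by (simp add: algebra_simps C)
lemma N3: "c*x + d*(-(di*c*x)) = 0" by (simp add: algebra_simps C)
lemma N4: "c*(-(x*b*di)) + d*(bi*a*x*b*di) = 1" by (simp add: algebra_simps C hmd)
lemma N5: "x*a + (-(x*b*di))*c = 1" by (simp add: algebra_simps C hmd)
lemma N6: "x*b + (-(x*b*di))*d = 0" by (simp add: algebra_simps C)
lemma N7: "(-(di*c*x))*a + (bi*a*x*b*di)*c = 0" by (simp add: algebra_simps C hdc hdc2)
lemma N8: "(-(di*c*x))*b + (bi*a*x*b*di)*d = 1" by (simp add: algebra_simps C hmd)

lemma R1a: "(-(di*c*x))*(b - a*ci*d) = 1"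
  by ((simp add: algebra_simps C hmd; fail) | (simp add: algebra_simps C hdc hdc2; fail) | (simp add: algebra_simps C hbdc; fail))
lemma R1b: "(b - a*ci*d)*(-(di*c*x)) = 1"
  by ((simp add: algebra_simps C hmd; fail) | (simp add: algebra_simps C hdc hdc2; fail) | (simp add: algebra_simps C hbdc; fail))
lemma R2a: "(-(x*b*di))*(c - d*bi*a) = 1"
  by ((simp add: algebra_simps C hmd; fail) | (simp add: algebra_simps C hdc hdc2; fail) | (simp add: algebra_simps C hbdc; fail))
lemma R2b: "(c - d*bi*a)*(-(x*b*di)) = 1"
  by ((simp add: algebra_simps C hmd; fail) | (simp add: algebra_simps C hdc hdc2; fail) | (simp add: algebra_simps C hbdc; fail))
lemma R3a: "(bi*a*x*b*di)*(d - c*ai*b) = 1"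
  by ((simp add: algebra_simps C hmd; fail) | (simp add: algebra_simps C hdc hdc2; fail) | (simp add: algebra_simps C hbdc; fail))
lemma hba: "bi*(a*y) = di*(c*y) + bi*(m*y)"
  using hdc[of y] by (simp add: algebra_simps)

lemma R3b: "(d - c*ai*b)*(bi*a*x*b*di) = 1"
proof -
  have "(d - c*ai*b)*(bi*a*x*b*di) = d*(bi*(a*(x*(b*di)))) - c*(x*(b*di))"
    by (simp add: algebra_simps C)
  also have "\<dots> = 1" by (simp add: hba algebra_simps C)
  finally show ?thesis .
qed
lemma P1: "ai*(-(a*x*b*di*c)) + ci*(c*x*a) = 1"
  by ((simp add: algebra_simps C hmd; fail) | (simp add: algebra_simps C hdc hdc2; fail) | (simp add: algebra_simps C hbdc; fail))
lemma P2: "ai*(a*x*b) + ci*(-(c*x*b)) = 0"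
  by ((simp add: algebra_simps C hmd; fail) | (simp add: algebra_simps C hdc hdc2; fail) | (simp add: algebra_simps C hbdc; fail))
lemma P3: "bi*(-(a*x*b*di*c)) + di*(c*x*a) = 0"
  by ((simp add: algebra_simps C hmd; fail) | (simp add: algebra_simps C hdc hdc2; fail) | (simp add: algebra_simps C hbdc; fail))
lemma P4: "bi*(a*x*b) + di*(-(c*x*b)) = 1"
  by ((simp add: algebra_simps C hmd; fail) | (simp add: algebra_simps C hdc hdc2; fail) | (simp add: algebra_simps C hbdc; fail))
lemma Q1: "(-(a*x*b*di*c))*ai + (a*x*b)*bi = 1"
  by ((simp add: algebra_simps C hmd; fail) | (simp add: algebra_simps C hdc hdc2; fail) | (simp add: algebra_simps C hbdc; fail))
lemma Q2: "(-(a*x*b*di*c))*ci + (a*x*b)*di = 0"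
  by ((simp add: algebra_simps C hmd; fail) | (simp add: algebra_simps C hdc hdc2; fail) | (simp add: algebra_simps C hbdc; fail))
lemma Q3: "(c*x*a)*ai + (-(c*x*b))*bi = 0"
  by ((simp add: algebra_simps C hmd; fail) | (simp add: algebra_simps C hdc hdc2; fail) | (simp add: algebra_simps C hbdc; fail))
lemma Q4: "(c*x*a)*ci + (-(c*x*b))*di = 1"
  by ((simp add: algebra_simps C hmd; fail) | (simp add: algebra_simps C hdc hdc2; fail) | (simp add: algebra_simps C hbdc; fail))
lemma U1: "(-(a*x*b*di*c*ai))*m*(x*a) = -(a*x*b*di*c)"
  by ((simp add: algebra_simps C hmd; fail) | (simp add: algebra_simps C hdc hdc2; fail) | (simp add: algebra_simps C hbdc; fail))
lemma U2: "(-(a*x*b*di*c*ai))*(b - a*ci*d)*(bi*a*x*b) = a*x*b"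
proof -
  have "(-(a*x*b*di*c*ai))*(b - a*ci*d)*(bi*a*x*b) = a*(x*(a*(x*b))) - a*(x*(b*(di*(c*(x*b)))))"
    by (simp add: algebra_simps C)
  also have "\<dots> = a*x*b" by (simp add: hbdc algebra_simps C)
  finally show ?thesis .
qed
lemma U3: "(-(c*x*b*di))*(c - d*bi*a)*(x*a) = c*x*a"
  by ((simp add: algebra_simps C hmd; fail) | (simp add: algebra_simps C hdc hdc2; fail) | (simp add: algebra_simps C hbdc; fail))
lemma U4: "(-(c*x*b*di))*(d - c*ai*b)*(bi*a*x*b) = -(c*x*b)"
  by ((simp add: algebra_simps C hmd; fail) | (simp add: algebra_simps C hdc hdc2; fail) | (simp add: algebra_simps C hbdc; fail))

end


lemma core:
  fixes M :: "'a::ring_1^2^2"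
  defines "a \<equiv> M$1$1" and "b \<equiv> M$1$2" and "c \<equiv> M$2$1" and "d \<equiv> M$2$2"
  assumes u: "is_runit a" "is_runit b" "is_runit c" "is_runit d" "is_runit (a - b * rinv d * c)"
  shows "invertible M"
    "matrix_inv M = (let x = rinv (a - b * rinv d * c) in
        mk2 x (-(x*b*rinv d)) (-(rinv d*c*x)) (rinv b*a*x*b*rinv d))"
    "J M = mk2 (a - b*rinv d*c) (b - a*rinv c*d) (c - d*rinv b*a) (d - c*rinv a*b)"
    "invertible (J2 M)"
    "Jinv M = (let x = rinv (a - b * rinv d * c) in
        mk2 (-(a*x*b*rinv d*c)) (a*x*b) (c*x*a) (-(c*x*b)))"
    "diag_equiv (J M) (Jinv M)"
proof -
  define m where "m = a - b * rinv d * c"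
  define x where "x = rinv m"
  define ai where "ai = rinv a"
  define bi where "bi = rinv b"
  define ci where "ci = rinv c"
  define di where "di = rinv d"
  have h: "a*ai = 1" "ai*a = 1" "b*bi = 1" "bi*b = 1" "c*ci = 1" "ci*c = 1" "d*di = 1" "di*d = 1"
    "m*x = 1" "x*m = 1" "a = m + b*di*c"
    using runit_inv[OF u(1)] runit_inv[OF u(2)] runit_inv[OF u(3)] runit_inv[OF u(4)]
      runit_inv[OF u(5)] unfolding m_def x_def ai_def bi_def ci_def di_def by auto
  have Me: "M = mk2 a b c d" unfolding a_def b_def c_def d_def by (rule mk2_eta)
  define N where "N = mk2 x (-(x*b*di)) (-(di*c*x)) (bi*a*x*b*di)"
  have MN: "M ** N = mat 1" "N ** M = mat 1"
    unfolding Me N_def mk2_mult mat1_2 mk2_eq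
    using N1[OF h] N2[OF h] N3[OF h] N4[OF h] N5[OF h] N6[OF h] N7[OF h] N8[OF h] by auto
  show "invertible M" using inv_unique[OF MN] by auto
  have iM: "matrix_inv M = N" using inv_unique[OF MN] by auto
  then show "matrix_inv M = (let x = rinv (a - b * rinv d * c) in
        mk2 x (-(x*b*rinv d)) (-(rinv d*c*x)) (rinv b*a*x*b*rinv d))"
    by (simp add: N_def x_def m_def bi_def di_def Let_def)
  have JM: "J M = mk2 m (b - a*ci*d) (c - d*bi*a) (d - c*ai*b)"
    unfolding J_def J1_def iM N_def J2_mk2 mk2_eq
    using rinv_eq[OF h(9,10)] runit_rinv(2)[OF u(5)] 
      rinv_eq[OF R1a[OF h] R1b[OF h]] rinv_eq[OF R2a[OF h] R2b[OF h]] rinv_eq[OF R3a[OF h] R3b[OF h]]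
    by (simp add: x_def m_def)
  then show "J M = mk2 (a - b*rinv d*c) (b - a*rinv c*d) (c - d*rinv b*a) (d - c*rinv a*b)"
    by (simp add: m_def ai_def bi_def ci_def di_def)
  define K where "K = mk2 (-(a*x*b*di*c)) (a*x*b) (c*x*a) (-(c*x*b))"
  have J2M: "J2 M = mk2 ai ci bi di" unfolding Me J2_mk2 ai_def bi_def ci_def di_def ..
  have PK: "J2 M ** K = mat 1" "K ** J2 M = mat 1"
    unfolding J2M K_def mk2_mult mat1_2 mk2_eq
    using P1[OF h] P2[OF h] P3[OF h] P4[OF h] Q1[OF h] Q2[OF h] Q3[OF h] Q4[OF h] by auto
  show "invertible (J2 M)" using inv_unique[OF PK] by auto
  have iK: "Jinv M = K" unfolding Jinv_def J1_def using inv_unique[OF PK] by auto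
  then show "Jinv M = (let x = rinv (a - b * rinv d * c) in
        mk2 (-(a*x*b*rinv d*c)) (a*x*b) (c*x*a) (-(c*x*b)))"
    by (simp add: K_def x_def m_def di_def Let_def)
  define u1 where "u1 = -(a*x*b*di*c*ai)"
  define u2 where "u2 = -(c*x*b*di)"
  define v1 where "v1 = x*a"
  define v2 where "v2 = bi*a*x*b"
  have ux: "is_runit x" using runit_rinv[OF u(5)] unfolding x_def m_def by auto
  have uu: "is_runit ai" "is_runit bi" "is_runit ci" "is_runit di"
    using runit_rinv u unfolding ai_def bi_def ci_def di_def by auto
  have us: "is_runit u1" "is_runit u2" "is_runit v1" "is_runit v2"
    unfolding u1_def u2_def v1_def v2_def using u uu ux
    by (simp_all add: runit_mult runit_neg_iff)
  define D1 where "D1 = mk2 (rinv u1) 0 0 (rinv u2)"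
  define D2 where "D2 = mk2 v1 0 0 v2"
  have D1i: "D1 ** mk2 u1 0 0 u2 = mat 1" "mk2 u1 0 0 u2 ** D1 = mat 1"
    unfolding D1_def mk2_mult mat1_2 mk2_eq using runit_inv[OF us(1)] runit_inv[OF us(2)] by auto
  have D2i: "D2 ** mk2 (rinv v1) 0 0 (rinv v2) = mat 1" "mk2 (rinv v1) 0 0 (rinv v2) ** D2 = mat 1"
    unfolding D2_def mk2_mult mat1_2 mk2_eq using runit_inv[OF us(3)] runit_inv[OF us(4)] by auto
  have "K = matrix_inv D1 ** J M ** D2"
    unfolding inv_unique(2)[OF D1i] JM D2_def K_def mk2_mult mk2_eq u1_def u2_def v1_def v2_def
    using U1[OF h] U2[OF h] U3[OF h] U4[OF h] by (simp add: mult.assoc)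
  then show "diag_equiv (J M) (Jinv M)"
    unfolding diag_equiv_def iK using inv_unique(1)[OF D1i] inv_unique(1)[OF D2i] diag_mk2
    unfolding D1_def D2_def by blast
qed



lemma inv_nec:
  fixes M :: "'a::ring_1^2^2"
  assumes u: "is_runit (M$1$1)" "is_runit (M$1$2)" "is_runit (M$2$1)" "is_runit (M$2$2)"
    and i: "invertible M"
  shows "is_runit (M$1$1 - M$1$2 * rinv (M$2$2) * M$2$1)"
proof -
  define a b c d where "a = M$1$1" and "b = M$1$2" and "c = M$2$1" and "d = M$2$2"
  have Me: "M = mk2 a b c d" unfolding a_def b_def c_def d_def by (rule mk2_eta)
  obtain N where N: "M ** N = mat 1" "N ** M = mat 1" using i invertible_def by blast
  define x y z w where "x = N$1$1" and "y = N$1$2" and "z = N$2$1" and "w = N$2$2"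
  have Ne: "N = mk2 x y z w" unfolding x_def y_def z_def w_def by (rule mk2_eta)
  have e: "a*x + b*z = 1" "c*x + d*z = 0" "x*a + y*c = 1" "x*b + y*d = 0"
    using N unfolding Me Ne mk2_mult mat1_2 mk2_eq by auto
  have hd: "d * rinv d = 1" "rinv d * d = 1" using runit_inv u(4) d_def by auto
  have z: "z = -(rinv d * c * x)"
  proof -
    have "z = rinv d * (d * z)" using hd by (simp add: mult.assoc[symmetric])
    also have "d * z = - (c * x)" using e(2) by (simp add: eq_neg_iff_add_eq_0 add.commute)
    finally show ?thesis by (simp add: mult.assoc)
  qed
  have y: "y = -(x * b * rinv d)"
  proof -
    have "y = (y * d) * rinv d" using hd by (simp add: mult.assoc)
    also have "y * d = - (x * b)" using e(4) by (simp add: eq_neg_iff_add_eq_0 add.commute)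
    finally show ?thesis by simp
  qed
  have "(a - b * rinv d * c) * x = 1" using e(1) z by (simp add: algebra_simps)
  moreover have "x * (a - b * rinv d * c) = 1" using e(3) y by (simp add: algebra_simps)
  ultimately show ?thesis using is_runitI unfolding a_def b_def c_def d_def by blast
qed

lemma cond_eq:
  fixes a b c d :: "'a::ring_1"
  assumes u: "is_runit a" "is_runit b" "is_runit c" "is_runit d"
  shows "is_runit (a - b * rinv d * c) \<longleftrightarrow> is_runit (d * rinv b - c * rinv a)"
    "is_runit (rinv a - rinv c * rinv (rinv d) * rinv b) \<longleftrightarrow> is_runit (d * rinv b - c * rinv a)"
proof -
  note h = runit_inv[OF u(1)] runit_inv[OF u(2)] runit_inv[OF u(3)] runit_inv[OF u(4)]
  have "a - b * rinv d * c = b * rinv d * (d * rinv b - c * rinv a) * a"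
    using h by (simp add: algebra_simps mult_cancel1)
  then show "is_runit (a - b * rinv d * c) \<longleftrightarrow> is_runit (d * rinv b - c * rinv a)"
    using runit_sandwich[of "b * rinv d" a] u runit_mult runit_rinv by metis
  have "rinv a - rinv c * rinv (rinv d) * rinv b = (- rinv c) * (d * rinv b - c * rinv a) * 1"
    using h runit_rinv(2)[OF u(4)] by (simp add: algebra_simps mult_cancel1)
  then show "is_runit (rinv a - rinv c * rinv (rinv d) * rinv b) \<longleftrightarrow> is_runit (d * rinv b - c * rinv a)"
    using runit_sandwich[of "- rinv c" 1] u runit_neg runit_rinv is_runitI[of 1 1] by (metis mult_1)
qed

lemma inv_units:
  fixes M :: "'a::ring_1^2^2"
  assumes "M \<in> inv_mats \<inter> unit_mats"
  shows "matrix_inv M \<in> inv_mats \<inter> unit_mats"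
proof -
  have u: "is_runit (M$1$1)" "is_runit (M$1$2)" "is_runit (M$2$1)" "is_runit (M$2$2)"
    using assms unfolding unit_mats_def by auto
  have i: "invertible M" using assms inv_mats_def by auto
  note n = inv_nec[OF u i]
  define x where "x = rinv (M$1$1 - M$1$2 * rinv (M$2$2) * M$2$1)"
  have ux: "is_runit x" using runit_rinv[OF n] x_def by auto
  have uu: "is_runit (rinv (M$1$2))" "is_runit (rinv (M$2$2))" using runit_rinv u by auto
  have "matrix_inv M \<in> inv_mats" using inv_props(3)[OF i] by (simp add: inv_mats_def)
  moreover have "matrix_inv M \<in> unit_mats"
    unfolding core(2)[OF u n] Let_def
    by (simp add: unit_mats_mk2 runit_neg_iff runit_mult ux[unfolded x_def] u uu)
  ultimately show ?thesis by blast
qed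

lemma J2_J2: assumes "(M::'a::ring_1^2^2) \<in> unit_mats" shows "J2 (J2 M) = M \<and> J2 M \<in> unit_mats"
proof -
  have u: "is_runit (M$1$1)" "is_runit (M$1$2)" "is_runit (M$2$1)" "is_runit (M$2$2)"
    using assms unfolding unit_mats_def by auto
  show ?thesis
    apply (subst (1 2 3) mk2_eta[of M])
    by (simp add: J2_mk2 unit_mats_mk2 runit_rinv u)
qed



lemma unit_ents: "(M::'a::ring_1^2^2) \<in> unit_mats \<Longrightarrow>
   is_runit (M$1$1) \<and> is_runit (M$1$2) \<and> is_runit (M$2$1) \<and> is_runit (M$2$2)"
  unfolding unit_mats_def by auto

lemma domJ_eq: "(dom_J :: ('a::ring_1^2^2) set) = inv_mats \<inter> unit_mats"
proof (intro set_eqI iffI)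
  fix M :: "'a^2^2" assume "M \<in> dom_J"
  then have i: "invertible M" and n: "matrix_inv M \<in> unit_mats"
    unfolding dom_J_def inv_mats_def J1_def by auto
  have "matrix_inv M \<in> inv_mats \<inter> unit_mats" using n inv_props(3)[OF i] inv_mats_def by auto
  from inv_units[OF this] show "M \<in> inv_mats \<inter> unit_mats" using inv_props(4)[OF i] by simp
next
  fix M :: "'a^2^2" assume "M \<in> inv_mats \<inter> unit_mats"
  then show "M \<in> dom_J" using inv_units unfolding dom_J_def J1_def by auto
qed

lemma domJinv_eq: "(dom_Jinv :: ('a::ring_1^2^2) set) = inv_mats \<inter> unit_mats"
proof (intro set_eqI iffI)
  fix M :: "'a^2^2" assume "M \<in> dom_Jinv"
  then have um: "M \<in> unit_mats" and i: "invertible (J2 M)"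
    unfolding dom_Jinv_def inv_mats_def by auto
  note u = unit_ents[OF um]
  have u2: "is_runit (J2 M$1$1)" "is_runit (J2 M$1$2)" "is_runit (J2 M$2$1)" "is_runit (J2 M$2$2)"
    using unit_ents[OF conjunct2[OF J2_J2[OF um]]] by auto
  have "is_runit (J2 M$1$1 - J2 M$1$2 * rinv (J2 M$2$2) * J2 M$2$1)" by (rule inv_nec[OF u2 i])
  then have "is_runit (rinv (M$1$1) - rinv (M$2$1) * rinv (rinv (M$2$2)) * rinv (M$1$2))"
    by (simp add: J2_def)
  then have "is_runit (M$1$1 - M$1$2 * rinv (M$2$2) * M$2$1)"
    using cond_eq[of "M$1$1" "M$1$2" "M$2$1" "M$2$2"] u by blast
  then show "M \<in> inv_mats \<inter> unit_mats" using core(1) u um inv_mats_def by blast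
next
  fix M :: "'a^2^2" assume h: "M \<in> inv_mats \<inter> unit_mats"
  then have u: "is_runit (M$1$1)" "is_runit (M$1$2)" "is_runit (M$2$1)" "is_runit (M$2$2)"
    and i: "invertible M" using unit_ents inv_mats_def by auto
  show "M \<in> dom_Jinv" unfolding dom_Jinv_def inv_mats_def using core(4)[OF u inv_nec[OF u i]] h by auto
qed

theorem proposition2:
  fixes A :: "'a::ring_1 ^ 2 ^ 2"
  shows "dom_J = (dom_Jinv :: ('a ^ 2 ^ 2) set)
    \<and> (dom_J :: ('a ^ 2 ^ 2) set) = inv_mats \<inter> unit_mats
    \<and> bij_betw J (dom_J :: ('a ^ 2 ^ 2) set) dom_J
    \<and> (\<forall>M \<in> (dom_J :: ('a ^ 2 ^ 2) set).
          J M = (let a = M$1$1; b = M$1$2; c = M$2$1; d = M$2$2 in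
                 vector [vector [a - b * rinv d * c, b - a * rinv c * d],
                         vector [c - d * rinv b * a, d - c * rinv a * b]]))
    \<and> (\<forall>M \<in> (dom_J :: ('a ^ 2 ^ 2) set). diag_equiv (J M) (Jinv M))
    \<and> (A \<in> dom_J \<longleftrightarrow>
         (let a = A$1$1; b = A$1$2; c = A$2$1; d = A$2$2 in
          is_runit a \<and> is_runit b \<and> is_runit c \<and> is_runit d
          \<and> is_runit (d * rinv b - c * rinv a)))"
proof -
  let ?U = "inv_mats \<inter> (unit_mats :: ('a^2^2) set)"
  have pre: "\<And>M. M \<in> ?U \<Longrightarrow> is_runit (M$1$1) \<and> is_runit (M$1$2) \<and> is_runit (M$2$1) \<and> is_runit (M$2$2)
      \<and> is_runit (M$1$1 - M$1$2 * rinv (M$2$2) * M$2$1)"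
    using unit_ents inv_nec inv_mats_def by blast
  have J1U: "\<And>M. M \<in> ?U \<Longrightarrow> J1 M \<in> ?U \<and> J1 (J1 M) = M"
    unfolding J1_def using inv_units inv_props(4) inv_mats_def by auto
  have J2U: "\<And>M. M \<in> ?U \<Longrightarrow> J2 M \<in> ?U \<and> J2 (J2 M) = M"
  proof -
    fix M assume h: "M \<in> ?U"
    then have "M \<in> dom_Jinv" using domJinv_eq by blast
    then have "J2 M \<in> unit_mats" "J2 (J2 M) = M" "invertible (J2 M)"
      using J2_J2 unfolding dom_Jinv_def inv_mats_def by auto
    moreover have "J2 (J2 M) \<in> inv_mats" using h calculation by simp
    ultimately have "J2 M \<in> dom_Jinv" unfolding dom_Jinv_def inv_mats_def by auto
    then show "J2 M \<in> ?U \<and> J2 (J2 M) = M" using domJinv_eq \<open>J2 (J2 M) = M\<close> by blast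
  qed
  have bij: "bij_betw J ?U ?U"
  proof (rule bij_betw_byWitness[where f'=Jinv])
    show "\<forall>M\<in>?U. Jinv (J M) = M"
    proof
      fix M assume "M \<in> ?U" then show "Jinv (J M) = M" using J1U J2U unfolding J_def Jinv_def by metis
    qed
    show "\<forall>M\<in>?U. J (Jinv M) = M"
    proof
      fix M assume "M \<in> ?U" then show "J (Jinv M) = M" using J1U J2U unfolding J_def Jinv_def by metis
    qed
    show "J ` ?U \<subseteq> ?U" unfolding J_def using J1U J2U by blast
    show "Jinv ` ?U \<subseteq> ?U" unfolding Jinv_def using J1U J2U by blast
  qed
  show ?thesis
    unfolding domJ_eq domJinv_eq
  proof (intro conjI ballI)
    show "bij_betw J ?U ?U" by (rule bij)
  next
    fix M assume "M \<in> ?U"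
    from pre[OF this] have p: "is_runit (M$1$1)" "is_runit (M$1$2)" "is_runit (M$2$1)" "is_runit (M$2$2)"
      "is_runit (M$1$1 - M$1$2 * rinv (M$2$2) * M$2$1)" by auto
    show "J M = (let a = M$1$1; b = M$1$2; c = M$2$1; d = M$2$2 in
                 vector [vector [a - b * rinv d * c, b - a * rinv c * d],
                         vector [c - d * rinv b * a, d - c * rinv a * b]])"
      using core(3)[OF p] by (simp add: mk2_def Let_def)
  next
    fix M assume "M \<in> ?U"
    from pre[OF this] have p: "is_runit (M$1$1)" "is_runit (M$1$2)" "is_runit (M$2$1)" "is_runit (M$2$2)"
      "is_runit (M$1$1 - M$1$2 * rinv (M$2$2) * M$2$1)" by auto
    show "diag_equiv (J M) (Jinv M)" by (rule core(6)[OF p])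
  next
    show "(A \<in> ?U) = (let a = A$1$1; b = A$1$2; c = A$2$1; d = A$2$2 in
          is_runit a \<and> is_runit b \<and> is_runit c \<and> is_runit d
          \<and> is_runit (d * rinv b - c * rinv a))"
    proof
      assume "A \<in> ?U" then show "let a = A$1$1; b = A$1$2; c = A$2$1; d = A$2$2 in
          is_runit a \<and> is_runit b \<and> is_runit c \<and> is_runit d
          \<and> is_runit (d * rinv b - c * rinv a)"
        using pre cond_eq by (simp add: Let_def) blast
    next
      assume "let a = A$1$1; b = A$1$2; c = A$2$1; d = A$2$2 in
          is_runit a \<and> is_runit b \<and> is_runit c \<and> is_runit d
          \<and> is_runit (d * rinv b - c * rinv a)"
      then have u: "is_runit (A$1$1)" "is_runit (A$1$2)" "is_runit (A$2$1)" "is_runit (A$2$2)"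
        and c: "is_runit (A$2$2 * rinv (A$1$2) - A$2$1 * rinv (A$1$1))" by (auto simp: Let_def)
      have "is_runit (A$1$1 - A$1$2 * rinv (A$2$2) * A$2$1)" using cond_eq(1)[OF u] c by blast
      then show "A \<in> ?U" using core(1)[OF u] u unfolding inv_mats_def unit_mats_def forall_2 by auto
    qed
  qed simp_all
qed


end
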